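(* If the aggregate channel matrix $\mathbf{H} = [\mathbf{h}_{1},\dots,\mathbf{h}_{K}] \in \mathbb{C}^{N \times K}$ has full column rank, then there always exists a beamforming point $\{\mathbf{w}_m\}_{m=1}^M$ that satisfies the SINR constraints $\frac{\lvert \mathbf{h}_k^H \mathbf{w}_m \rvert^2}{\sum_{j \neq m} \lvert \mathbf{h}_k^H \mathbf{w}_j \rvert^2 + \sigma_k^2} \geq \gamma_k$ for all $k \in \mathcal{G}_m$, $m \in \mathcal{M}$, and it is given by $$\mathbf{W} = [\mathbf{w}_1, \mathbf{w}_2, \dots, \mathbf{w}_M] = \mathbf{H}(\mathbf{H}^H\mathbf{H})^{-1} \mathbf{A},$$ where $\mathbf{A}$ is a $K \times M$ complex-valued matrix with $(k,m)$-th element $A_{k,m} = \sqrt{\gamma_k \sigma_k^2}\, e^{j \theta_{k}}$ if $k \in \mathcal{G}_m$ and $A_{k,m}=0$ otherwise, with $\theta_{k} \in [0, 2\pi]$ arbitrary. Further, if this point $\mathbf{W} = \mathbf{H}(\mathbf{H}^H\mathbf{H})^{-1} \mathbf{A}$ also satisfies the per-antenna peak power constraints $\sum_{m=1}^M \mathbf{w}_m^H \mathbf{R}_n \mathbf{w}_m \leq P_n$ for all $n \in \mathcal{N}$, then it is a feasible solution of the QoS problem (minimize $\sum_{m=1}^M \lVert \mathbf{w}_m \rVert_2^2$ subject to these SINR constraints and per-antenna peak power constraints).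
   Context: A transmitter with $N$ antennas serves $M$ multicast groups of single-antenna users; $\mathcal{G}_m$ is the set of users in group $m$, $\mathcal{M}=\{1,\dots,M\}$, $\mathcal{K}=\{1,\dots,K\}$ is the set of all users, the groups are disjoint and their union is $\mathcal{K}$, and $\mathcal{N}=\{1,\dots,N\}$. $\mathbf{w}_m \in \mathbb{C}^N$ is the beamforming vector of group $m$, $\mathbf{h}_k \in \mathbb{C}^N$ the channel of user $k$, $\sigma_k^2>0$ the noise variance at user $k$, $\gamma_k$ the SINR target of user $k$, $P_n$ the peak power of antenna $n$, and $\mathbf{R}_n \in \{0,1\}^{N\times N}$ the all-zero matrix except a 1 at the $n$-th diagonal entry. The SINR of user $k \in \mathcal{G}_m$ is $\lvert \mathbf{h}_k^H \mathbf{w}_m \rvert^2 / (\sum_{j \neq m} \lvert \mathbf{h}_k^H \mathbf{w}_j \rvert^2 + \sigma_k^2)$. *)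

theory Defs
  imports "HOL-Analysis.Analysis"
begin

definition herm :: "complex^'c^'r \<Rightarrow> complex^'r^'c" where
  "herm A = (\<chi> i j. cnj (A $ j $ i))"

definition hinner :: "complex^'n \<Rightarrow> complex^'n \<Rightarrow> complex" where
  "hinner x y = (\<Sum>i\<in>UNIV. cnj (x $ i) * y $ i)"

definition Rsel :: "'n \<Rightarrow> complex^'n^'n" where
  "Rsel n = (\<chi> i j. if i = n \<and> j = n then 1 else 0)"

definition sinr :: "complex^'k^'n \<Rightarrow> complex^'m^'n \<Rightarrow> ('k \<Rightarrow> real) \<Rightarrow> 'k \<Rightarrow> 'm \<Rightarrow> real" where
  "sinr H W sigma2 k m =
     (cmod (hinner (column k H) (column m W)))\<^sup>2 /
     ((\<Sum>j\<in>UNIV - {m}. (cmod (hinner (column k H) (column j W)))\<^sup>2) + sigma2 k)"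

definition sinr_ok :: "complex^'k^'n \<Rightarrow> complex^'m^'n \<Rightarrow> ('k \<Rightarrow> real) \<Rightarrow> ('k \<Rightarrow> real)
    \<Rightarrow> ('m \<Rightarrow> 'k set) \<Rightarrow> bool" where
  "sinr_ok H W sigma2 gamma G = (\<forall>m. \<forall>k\<in>G m. sinr H W sigma2 k m \<ge> gamma k)"

text \<open>Per-antenna peak power: sum_m w_m^H R_n w_m \<le> P_n (the quantity is real).\<close>
definition power_ok :: "complex^'m^'n \<Rightarrow> ('n \<Rightarrow> real) \<Rightarrow> bool" where
  "power_ok W P = (\<forall>n. Re (\<Sum>m\<in>UNIV. hinner (column m W) (Rsel n *v column m W)) \<le> P n)"

definition qos_feasible :: "complex^'k^'n \<Rightarrow> ('k \<Rightarrow> real) \<Rightarrow> ('k \<Rightarrow> real)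
    \<Rightarrow> ('m \<Rightarrow> 'k set) \<Rightarrow> ('n \<Rightarrow> real) \<Rightarrow> complex^'m^'n \<Rightarrow> bool" where
  "qos_feasible H sigma2 gamma G P W \<longleftrightarrow> sinr_ok H W sigma2 gamma G \<and> power_ok W P"

end

theory Submission
  imports Defs
begin


lemma inj_H:
  fixes H :: "complex^'k::finite^'n::finite"
  assumes "rank H = CARD('k)"
  shows "inj ((*v) H)"
proof -
  have "vec.dim (rows H) = vec.dimension TYPE(complex) TYPE('k)"
    using assms by (simp add: row_rank_def_gen vec.dimension_def card_cart_basis)
  then have "vec.span (rows H) = UNIV" by (simp add: vec.dim_eq_full)
  then show ?thesis
    using matrix_left_invertible_span_rows_gen matrix_left_invertible_injective by blast
qed

lemma herm_quad:
  fixes H :: "complex^'k::finite^'n::finite"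
  shows "(\<Sum>j\<in>UNIV. cnj (x $ j) * ((herm H ** H) *v x) $ j) = (\<Sum>i\<in>UNIV. cnj ((H *v x) $ i) * (H *v x) $ i)"
proof -
  have "(herm H ** H) *v x = herm H *v (H *v x)" by (simp add: matrix_vector_mul_assoc)
  then have "(\<Sum>j\<in>UNIV. cnj (x $ j) * ((herm H ** H) *v x) $ j)
     = (\<Sum>j\<in>UNIV. \<Sum>i\<in>UNIV. cnj (x $ j) * cnj (H $ i $ j) * (H *v x) $ i)"
    by (simp add: matrix_vector_mult_def herm_def sum_distrib_left mult.assoc)
  also have "\<dots> = (\<Sum>i\<in>UNIV. \<Sum>j\<in>UNIV. cnj (x $ j) * cnj (H $ i $ j) * (H *v x) $ i)"
    by (rule sum.swap)
  also have "\<dots> = (\<Sum>i\<in>UNIV. cnj ((H *v x) $ i) * (H *v x) $ i)"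
  proof (rule sum.cong[OF refl])
    fix i
    have "cnj ((H *v x) $ i) = (\<Sum>j\<in>UNIV. cnj (x $ j) * cnj (H $ i $ j))"
      by (simp add: matrix_vector_mult_def mult.commute)
    then show "(\<Sum>j\<in>UNIV. cnj (x $ j) * cnj (H $ i $ j) * (H *v x) $ i) = cnj ((H *v x) $ i) * (H *v x) $ i"
      by (simp add: sum_distrib_right)
  qed
  finally show ?thesis .
qed

lemma inv_HH:
  fixes H :: "complex^'k::finite^'n::finite"
  assumes "rank H = CARD('k)"
  shows "(herm H ** H) ** matrix_inv (herm H ** H) = mat 1"
proof -
  have "\<forall>x. (herm H ** H) *v x = 0 \<longrightarrow> x = 0"
  proof (intro allI impI)
    fix x assume h: "(herm H ** H) *v x = 0"
    have "(\<Sum>i\<in>UNIV. cnj ((H *v x) $ i) * (H *v x) $ i) = 0"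
      using herm_quad[of x H] h by simp
    moreover have "(\<Sum>i\<in>UNIV. cnj ((H *v x) $ i) * (H *v x) $ i) = (\<Sum>i\<in>UNIV. complex_of_real ((cmod ((H *v x) $ i))\<^sup>2))"
      by (rule sum.cong[OF refl]) (metis complex_norm_square mult.commute of_real_power)
    ultimately have "(\<Sum>i\<in>UNIV. complex_of_real ((cmod ((H *v x) $ i))\<^sup>2)) = 0"
      by simp
    then have "(\<Sum>i\<in>UNIV. (cmod ((H *v x) $ i))\<^sup>2) = 0"
      by (metis of_real_0 of_real_eq_iff of_real_sum)
    then have "\<forall>i\<in>UNIV. (cmod ((H *v x) $ i))\<^sup>2 = 0"
      by (subst (asm) sum_nonneg_eq_0_iff) auto
    then have "H *v x = 0" by (simp add: vec_eq_iff)
    then show "x = 0" using inj_H[OF assms]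
      by (metis matrix_vector_mult_0_right injD)
  qed
  then have "invertible (herm H ** H)"
    using invertible_left_inverse matrix_left_invertible_ker by blast
  then show ?thesis unfolding matrix_inv_def invertible_def
    by (metis (mono_tags, lifting) someI_ex)
qed


theorem lemma1:
  fixes H :: "complex^'k::finite^'n::finite"
    and G :: "'m::finite \<Rightarrow> 'k::finite set"
    and sigma2 gamma :: "'k \<Rightarrow> real"
    and theta :: "'k \<Rightarrow> real"
    and P :: "'n \<Rightarrow> real"
  assumes groups_disjoint: "\<And>m m'. m \<noteq> m' \<Longrightarrow> G m \<inter> G m' = {}"
    and groups_cover: "(\<Union>m. G m) = UNIV"
    and noise_pos: "\<And>k. sigma2 k > 0"
    and theta_range: "\<And>k. theta k \<in> {0..2*pi}"
    and full_rank: "rank H = CARD('k)"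
  defines "A \<equiv> (\<chi> k m. if k \<in> G m
                  then complex_of_real (sqrt (gamma k * sigma2 k)) * cis (theta k)
                  else 0) :: complex^'m^'k"
  defines "W \<equiv> H ** matrix_inv (herm H ** H) ** A"
  shows "(\<exists>W'. sinr_ok H W' sigma2 gamma G)
         \<and> sinr_ok H W sigma2 gamma G
         \<and> (power_ok W P \<longrightarrow> qos_feasible H sigma2 gamma G P W)"
proof -
  have inv: "(herm H ** H) ** matrix_inv (herm H ** H) = mat 1"
    using inv_HH[OF full_rank] .
  have HW: "herm H ** W = A"
  proof -
    have "herm H ** W = ((herm H ** H) ** matrix_inv (herm H ** H)) ** A"
      unfolding W_def by (simp add: matrix_mul_assoc)
    then show ?thesis using inv by simp
  qed
  have hk: "hinner (column k H) (column m W) = A $ k $ m" for k m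
  proof -
    have "hinner (column k H) (column m W) = (herm H ** W) $ k $ m"
      by (simp add: hinner_def column_def herm_def matrix_matrix_mult_def)
    then show ?thesis using HW by simp
  qed
  have ok: "sinr_ok H W sigma2 gamma G"
    unfolding sinr_ok_def
  proof (intro allI ballI)
    fix m k assume k: "k \<in> G m"
    have z: "(\<Sum>j\<in>UNIV - {m}. (cmod (hinner (column k H) (column j W)))\<^sup>2) = 0"
    proof (rule sum.neutral, intro ballI)
      fix j assume "j \<in> UNIV - {m}"
      then have "k \<notin> G j" using groups_disjoint[of j m] k by auto
      then show "(cmod (hinner (column k H) (column j W)))\<^sup>2 = 0"
        by (simp add: hk A_def)
    qed
    have num: "(cmod (hinner (column k H) (column m W)))\<^sup>2 = \<bar>gamma k * sigma2 k\<bar>"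
      using k by (simp add: hk A_def norm_mult power2_eq_square real_sqrt_mult_self)
    have s: "sigma2 k > 0" by (rule noise_pos)
    have "gamma k \<le> \<bar>gamma k * sigma2 k\<bar> / sigma2 k"
      using s by (simp add: abs_mult)
    then show "gamma k \<le> sinr H W sigma2 k m"
      unfolding sinr_def using z num by simp
  qed
  show ?thesis using ok unfolding qos_feasible_def by blast
qed

end
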